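(* Let $R$ be a unital amenable affine algebra over a field $K$, with a fixed Følner exhaustion $\{W_n\}_{n\ge1}$ and a fixed ultralimit $\lim_\omega$. For a finitely generated left $R$-module $M=\sum_{i=1}^r Rx_i$, the quantity $$\mathrm{rank}(M)=\lim_\omega\frac{\dim_K(W_nx_1+\cdots+W_nx_r)}{\dim_K(W_n)}$$ does not depend on the choice of the generating set $\{x_1,\dots,x_r\}$ of $M$. Moreover, $\mathrm{rank}(M)$ is at most the minimal number of elements generating $M$ as an $R$-module.
   Context: An affine algebra is a finitely generated associative algebra over $K$. A Følner exhaustion is a sequence of finite-dimensional $K$-subspaces $W_1\subseteq W_2\subseteq\cdots$ with $\bigcup_nW_n=R$ such that for every $r\in R$, $\lim_{n\to\infty}\dim_K(W_nr+W_n)/\dim_K(W_n)=1$; $R$ is amenable if one exists. $\omega$ is an ultrafilter on $\mathbb N$ and $\lim_\omega:\ell^\infty(\mathbb N)\to\mathbb R$ the corresponding linear functional with $\liminf a_n\le\lim_\omega a_n\le\limsup a_n$, agreeing with the usual limit on convergent sequences. $W_nx=\{wx:w\in W_n\}$. *)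

theory Defs
  imports Complex_Main
begin

definition k_algebra :: "('k::field \<Rightarrow> 'r::ring_1 \<Rightarrow> 'r) \<Rightarrow> bool" where
  "k_algebra s \<longleftrightarrow> vector_space s \<and>
     (\<forall>c a b. s c (a * b) = s c a * b \<and> s c (a * b) = a * s c b)"

definition k_subalgebra :: "('k::field \<Rightarrow> 'r::ring_1 \<Rightarrow> 'r) \<Rightarrow> 'r set \<Rightarrow> bool" where
  "k_subalgebra s A \<longleftrightarrow> module.subspace s A \<and> 1 \<in> A \<and> (\<forall>a\<in>A. \<forall>b\<in>A. a * b \<in> A)"

definition affine_algebra :: "('k::field \<Rightarrow> 'r::ring_1 \<Rightarrow> 'r) \<Rightarrow> bool" where
  "affine_algebra s \<longleftrightarrow> k_algebra s \<and>
     (\<exists>G. finite G \<and> (\<forall>A. k_subalgebra s A \<and> G \<subseteq> A \<longrightarrow> A = UNIV))"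

definition folner_exhaustion :: "('k::field \<Rightarrow> 'r::ring_1 \<Rightarrow> 'r) \<Rightarrow> (nat \<Rightarrow> 'r set) \<Rightarrow> bool" where
  "folner_exhaustion s W \<longleftrightarrow>
     (\<forall>n. module.subspace s (W n) \<and> (\<exists>B. finite B \<and> W n = module.span s B)) \<and>
     (\<forall>n. W n \<subseteq> W (Suc n)) \<and> (\<Union>n. W n) = UNIV \<and>
     (\<forall>r. (\<lambda>n. real (vector_space.dim s ((\<lambda>w. w * r) ` W n \<union> W n))
                 / real (vector_space.dim s (W n))) \<longlonglongrightarrow> 1)"

definition ultrafilter :: "'a filter \<Rightarrow> bool" where
  "ultrafilter F \<longleftrightarrow> F \<noteq> bot \<and> (\<forall>P. eventually P F \<or> eventually (\<lambda>x. \<not> P x) F)"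

definition left_module :: "('r::ring_1 \<Rightarrow> 'm::ab_group_add \<Rightarrow> 'm) \<Rightarrow> bool" where
  "left_module act \<longleftrightarrow> (\<forall>m. act 1 m = m) \<and> (\<forall>a b m. act (a * b) m = act a (act b m)) \<and>
     (\<forall>a b m. act (a + b) m = act a m + act b m) \<and> (\<forall>a m n. act a (m + n) = act a m + act a n)"

definition generates :: "('r::ring_1 \<Rightarrow> 'm::ab_group_add \<Rightarrow> 'm) \<Rightarrow> 'm list \<Rightarrow> bool" where
  "generates act xs \<longleftrightarrow> (\<forall>m. \<exists>c. m = (\<Sum>i<length xs. act (c i) (xs ! i)))"

definition mscale :: "('k::field \<Rightarrow> 'r::ring_1 \<Rightarrow> 'r) \<Rightarrow> ('r \<Rightarrow> 'm::ab_group_add \<Rightarrow> 'm) \<Rightarrow> 'k \<Rightarrow> 'm \<Rightarrow> 'm" where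
  "mscale s act c m = act (s c 1) m"

definition rank_gen :: "('k::field \<Rightarrow> 'r::ring_1 \<Rightarrow> 'r) \<Rightarrow> ('r \<Rightarrow> 'm::ab_group_add \<Rightarrow> 'm) \<Rightarrow>
    nat filter \<Rightarrow> (nat \<Rightarrow> 'r set) \<Rightarrow> 'm list \<Rightarrow> real" where
  "rank_gen s act \<omega> W xs = Lim \<omega> (\<lambda>n.
      real (vector_space.dim (mscale s act) (\<Union>i<length xs. (\<lambda>w. act w (xs ! i)) ` W n))
      / real (vector_space.dim s (W n)))"

end

theory Submission imports Defs "HOL-Analysis.Analysis" begin

context vector_space begin

lemma ext_basis:
  assumes "finite B" "finite E" "B \<subseteq> span E"
  shows "\<exists>C. finite C \<and> span E \<subseteq> span (B \<union> C) \<and> real (card C) = real (dim E) - real (dim B)"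
proof -
  obtain D where D: "D \<subseteq> B" "independent D" "B \<subseteq> span D" "card D = dim B"
    using basis_exists by blast
  have "D \<subseteq> span E" using D(1) assms(3) by blast
  then obtain B' where B': "D \<subseteq> B'" "B' \<subseteq> span E" "independent B'" "span E \<subseteq> span B'"
    using maximal_independent_subset_extend[of D "span E"] D(2) by blast
  have fB': "finite B'" using independent_span_bound[OF assms(2) B'(3) B'(2)] by blast
  have cB': "card B' = dim E"
    using basis_card_eq_dim[OF B'(2) B'(4) B'(3)] by simp
  define C where "C = B' - D"
  have "finite C" using fB' C_def by simp
  moreover have "span E \<subseteq> span (B \<union> C)"
  proof -
    have "B' \<subseteq> B \<union> C" using C_def D(1) by blast
    then have "span B' \<subseteq> span (B \<union> C)" by (rule span_mono)
    then show ?thesis using B'(4) by blast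
  qed
  moreover have "card C = card B' - card D" unfolding C_def
    using card_Diff_subset[OF finite_subset[OF B'(1) fB'] B'(1)] .
  moreover have "card D \<le> card B'" using card_mono[OF fB' B'(1)] .
  ultimately show ?thesis using cB' D(4) by (intro exI[of _ C]) auto
qed

end


lemma key:
  fixes s :: "'k::field \<Rightarrow> 'r::ring_1 \<Rightarrow> 'r" and t :: "'k \<Rightarrow> 'm::ab_group_add \<Rightarrow> 'm" and a :: "nat \<Rightarrow> nat \<Rightarrow> 'r"
  assumes vs: "vector_space s" "vector_space t"
  and rmul: "\<And>c. Vector_Spaces.linear s s (\<lambda>w. w * c)"
  and lin: "\<And>i. i < r \<Longrightarrow> Vector_Spaces.linear s t (f i)"
  and g: "\<And>j w. j < q \<Longrightarrow> g j w = (\<Sum>i<r. f i (w * a j i))"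
  and B0: "finite B0"
  shows "real (vector_space.dim t (\<Union>j<q. g j ` module.span s B0))
    \<le> real (vector_space.dim t (\<Union>i<r. f i ` module.span s B0))
      + (\<Sum>j<q. \<Sum>i<r. (real (vector_space.dim s ((\<lambda>w. w * a j i) ` module.span s B0 \<union> module.span s B0))
             - real (vector_space.dim s (module.span s B0))))"
proof -
  interpret R: vector_space s by fact
  interpret M: vector_space t by fact
  interpret P: vector_space_pair s t by unfold_locales
  interpret RR: vector_space_pair s s by unfold_locales
  define E where "E j i = (\<lambda>w. w * a j i) ` B0 \<union> B0" for j i
  define S where "S j i = (\<lambda>w. w * a j i) ` R.span B0 \<union> R.span B0" for j i
  have spES: "R.span (E j i) = R.span (S j i)" for j i
  proof (rule R.span_eq[THEN iffD2, OF conjI])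
    have "B0 \<subseteq> R.span B0" by (rule R.span_superset)
    then have "E j i \<subseteq> S j i" unfolding E_def S_def by blast
    then show "E j i \<subseteq> R.span (S j i)" using R.span_superset by blast
    have "(\<lambda>w. w * a j i) ` R.span B0 = R.span ((\<lambda>w. w * a j i) ` B0)"
      using RR.linear_span_image[OF rmul] by simp
    also have "\<dots> \<subseteq> R.span (E j i)" unfolding E_def by (rule R.span_mono) auto
    finally show "S j i \<subseteq> R.span (E j i)" unfolding S_def
      using R.span_mono[of B0 "E j i"] unfolding E_def by auto
  qed
  have SE: "S j i \<subseteq> R.span (E j i)" for j i using spES R.span_superset by blast
  have "\<forall>ji. \<exists>C. let j = fst ji; i = snd ji in finite C \<and> R.span (E j i) \<subseteq> R.span (B0 \<union> C) \<and>
      real (card C) = real (R.dim (E j i)) - real (R.dim B0)"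
  proof (intro allI)
    fix ji :: "nat \<times> nat"
    obtain j i where ji: "ji = (j, i)" by fastforce
    have "\<exists>C. finite C \<and> R.span (E j i) \<subseteq> R.span (B0 \<union> C) \<and>
      real (card C) = real (R.dim (E j i)) - real (R.dim B0)"
    proof (rule R.ext_basis)
      show "finite B0" by fact
      show "finite (E j i)" unfolding E_def using B0 by simp
      show "B0 \<subseteq> R.span (E j i)" unfolding E_def using R.span_superset by blast
    qed
    then show "\<exists>C. let j = fst ji; i = snd ji in finite C \<and> R.span (E j i) \<subseteq> R.span (B0 \<union> C) \<and>
      real (card C) = real (R.dim (E j i)) - real (R.dim B0)" unfolding ji by simp
  qed
  from choice[OF this] obtain C0 where C0: "\<forall>ji. let j = fst ji; i = snd ji in finite (C0 ji) \<and> R.span (E j i) \<subseteq> R.span (B0 \<union> C0 ji) \<and>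
      real (card (C0 ji)) = real (R.dim (E j i)) - real (R.dim B0)" by blast
  define C where "C j i = C0 (j, i)" for j i
  have C: "\<And>j i. finite (C j i)" "\<And>j i. R.span (E j i) \<subseteq> R.span (B0 \<union> C j i)"
     "\<And>j i. real (card (C j i)) = real (R.dim (E j i)) - real (R.dim B0)"
    using C0 unfolding C_def Let_def by (metis fst_conv snd_conv)+
  define X where "X = (\<Union>i<r. f i ` R.span B0)"
  have XD: "X \<subseteq> M.span (\<Union>i<r. f i ` B0)"
  proof -
    have "f i ` R.span B0 \<subseteq> M.span (\<Union>i<r. f i ` B0)" if "i < r" for i
    proof -
      have "f i ` R.span B0 = M.span (f i ` B0)" using P.linear_span_image[OF lin[OF that]] by simp
      also have "\<dots> \<subseteq> M.span (\<Union>i<r. f i ` B0)" by (rule M.span_mono) (use that in auto)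
      finally show ?thesis .
    qed
    then show ?thesis unfolding X_def by blast
  qed
  obtain D where D: "D \<subseteq> X" "M.independent D" "X \<subseteq> M.span D" "card D = M.dim X"
    using M.basis_exists by blast
  have fD: "finite D"
  proof -
    have "finite (\<Union>i<r. f i ` B0)" using B0 by simp
    moreover have "D \<subseteq> M.span (\<Union>i<r. f i ` B0)" using D(1) XD by (rule order_trans)
    ultimately show ?thesis using M.independent_span_bound[OF _ D(2)] by blast
  qed
  define F where "F = (\<Union>j<q. \<Union>i<r. f i ` C j i)"
  have fF: "finite F" unfolding F_def using C(1) by auto
  have cF: "card F \<le> (\<Sum>j<q. \<Sum>i<r. card (C j i))"
  proof -
    have "card F \<le> (\<Sum>j<q. card (\<Union>i<r. f i ` C j i))" unfolding F_def by (rule card_UN_le) simp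
    also have "\<dots> \<le> (\<Sum>j<q. \<Sum>i<r. card (C j i))"
    proof (rule sum_mono)
      fix j
      have "card (\<Union>i<r. f i ` C j i) \<le> (\<Sum>i<r. card (f i ` C j i))" by (rule card_UN_le) simp
      also have "\<dots> \<le> (\<Sum>i<r. card (C j i))" by (rule sum_mono) (rule card_image_le[OF C(1)])
      finally show "card (\<Union>i<r. f i ` C j i) \<le> (\<Sum>i<r. card (C j i))" .
    qed
    finally show ?thesis .
  qed
  have YS: "(\<Union>j<q. g j ` R.span B0) \<subseteq> M.span (D \<union> F)"
  proof
    fix y assume "y \<in> (\<Union>j<q. g j ` R.span B0)"
    then obtain j w where jw: "j < q" "w \<in> R.span B0" "y = g j w" by blast
    have "f i (w * a j i) \<in> M.span (D \<union> F)" if i: "i < r" for i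
    proof -
      have "w * a j i \<in> S j i" unfolding S_def using jw by blast
      then have "w * a j i \<in> R.span (B0 \<union> C j i)" using SE C(2) by blast
      then have "f i (w * a j i) \<in> f i ` R.span (B0 \<union> C j i)" by blast
      also have "\<dots> = M.span (f i ` (B0 \<union> C j i))" using P.linear_span_image[OF lin[OF i]] by simp
      also have "\<dots> \<subseteq> M.span (D \<union> F)"
      proof (rule M.span_minimal[OF _ M.subspace_span])
        have "f i ` B0 \<subseteq> X" unfolding X_def using i R.span_superset by blast
        then have "f i ` B0 \<subseteq> M.span (D \<union> F)" using D(3) M.span_mono[of D "D \<union> F"] by blast
        moreover have "f i ` C j i \<subseteq> M.span (D \<union> F)" unfolding F_def using i jw(1)
          by (auto intro!: M.span_base)
        ultimately show "f i ` (B0 \<union> C j i) \<subseteq> M.span (D \<union> F)" by blast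
      qed
      finally show ?thesis .
    qed
    then show "y \<in> M.span (D \<union> F)" unfolding jw(3) g[OF jw(1)] by (intro M.span_sum) auto
  qed
  have "M.dim (\<Union>j<q. g j ` R.span B0) \<le> card (D \<union> F)"
    by (rule M.dim_le_card[OF YS]) (use fD fF in auto)
  also have "\<dots> \<le> card D + card F" by (rule card_Un_le)
  finally have "real (M.dim (\<Union>j<q. g j ` R.span B0)) \<le> real (M.dim X) + real (\<Sum>j<q. \<Sum>i<r. card (C j i))"
    using cF D(4) by linarith
  also have "real (\<Sum>j<q. \<Sum>i<r. card (C j i)) = (\<Sum>j<q. \<Sum>i<r. (real (R.dim (S j i)) - real (R.dim (R.span B0))))"
    using C(3) R.span_eq_dim[OF spES] by simp
  finally show ?thesis unfolding X_def S_def .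
qed


lemma ultra_conv:
  fixes f :: "nat \<Rightarrow> real"
  assumes u: "ultrafilter \<omega>" and b: "\<And>n. 0 \<le> f n \<and> f n \<le> N"
  shows "\<exists>L. (f \<longlongrightarrow> L) \<omega> \<and> L \<le> N"
proof -
  have nb: "\<omega> \<noteq> bot" using u unfolding ultrafilter_def by blast
  have "compact {0..N}" by simp
  moreover have "filtermap f \<omega> \<noteq> bot" using nb by (simp add: filtermap_bot_iff)
  moreover have "eventually (\<lambda>x. x \<in> {0..N}) (filtermap f \<omega>)"
    using b by (simp add: eventually_filtermap)
  ultimately obtain x where x: "x \<in> {0..N}" "inf (nhds x) (filtermap f \<omega>) \<noteq> bot"
    unfolding compact_filter by blast
  have "(f \<longlongrightarrow> x) \<omega>"
  proof (rule topological_tendstoI)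
    fix S :: "real set" assume S: "open S" "x \<in> S"
    show "eventually (\<lambda>n. f n \<in> S) \<omega>"
    proof (rule ccontr)
      assume "\<not> eventually (\<lambda>n. f n \<in> S) \<omega>"
      then have e: "eventually (\<lambda>n. f n \<notin> S) \<omega>" using u unfolding ultrafilter_def by blast
      have "eventually (\<lambda>y. y \<in> S) (nhds x)" using S by (rule eventually_nhds_in_open)
      moreover have "eventually (\<lambda>y. y \<notin> S) (filtermap f \<omega>)" using e by (simp add: eventually_filtermap)
      ultimately have "eventually (\<lambda>y. False) (inf (nhds x) (filtermap f \<omega>))"
        unfolding eventually_inf by blast
      then show False using x(2) by (simp add: eventually_False)
    qed
  qed
  then show ?thesis using x(1) by auto
qed

lemma act_0: "left_module act \<Longrightarrow> act w 0 = 0"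
proof -
  assume "left_module act"
  then have "act w (0 + 0) = act w 0 + act w 0" unfolding left_module_def by blast
  then show ?thesis by simp
qed

lemma act_sum: assumes "left_module act" "finite I" shows "act w (\<Sum>i\<in>I. h i) = (\<Sum>i\<in>I. act w (h i))"
  using assms(2) by (induction I rule: finite_induct) (use assms(1) in \<open>simp_all add: act_0 left_module_def\<close>)

lemma kalg_vs: "k_algebra s \<Longrightarrow> vector_space s"
  unfolding k_algebra_def by blast

lemma kalg_rmul: "k_algebra s \<Longrightarrow> Vector_Spaces.linear s s (\<lambda>w. w * c)"
  unfolding Vector_Spaces.linear_iff using kalg_vs[of s]
  by (auto simp: k_algebra_def distrib_right)

lemma mscale_vs:
  assumes "k_algebra s" "left_module act"
  shows "vector_space (mscale s act)"
proof -
  interpret R: vector_space s using kalg_vs[OF assms(1)] .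
  have m: "s a 1 * s b 1 = s (a * b) 1" for a b
  proof -
    have "s (a * b) 1 = s a (s b 1)" by simp
    also have "\<dots> = s a (1 * s b 1)" by simp
    also have "\<dots> = s a 1 * s b 1" using assms(1) unfolding k_algebra_def by metis
    finally show ?thesis by simp
  qed
  have lm: "\<And>m. act 1 m = m" "\<And>a b m. act (a * b) m = act a (act b m)"
     "\<And>a b m. act (a + b) m = act a m + act b m" "\<And>a m n. act a (m + n) = act a m + act a n"
    using assms(2) unfolding left_module_def by blast+
  show ?thesis unfolding vector_space_def mscale_def
  proof (intro allI conjI)
    fix a b x y
    show "act (s a 1) (x + y) = act (s a 1) x + act (s a 1) y" by (rule lm(4))
    show "act (s (a + b) 1) x = act (s a 1) x + act (s b 1) x" by (simp add: R.scale_left_distrib lm(3))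
    show "act (s a 1) (act (s b 1) x) = act (s (a * b) 1) x" by (simp add: lm(2)[symmetric] m)
    show "act (s 1 1) x = x" by (simp add: lm(1))
  qed
qed

lemma act_lin:
  assumes "k_algebra s" "left_module act"
  shows "Vector_Spaces.linear s (mscale s act) (\<lambda>w. act w x)"
proof -
  interpret R: vector_space s using kalg_vs[OF assms(1)] .
  have e: "s c 1 * w = s c w" for c w
  proof -
    have "s c (1 * w) = s c 1 * w" using assms(1) unfolding k_algebra_def by metis
    then show ?thesis by simp
  qed
  have lm: "\<And>a b m. act (a * b) m = act a (act b m)"
     "\<And>a b m. act (a + b) m = act a m + act b m"
    using assms(2) unfolding left_module_def by blast+
  show ?thesis unfolding Vector_Spaces.linear_iff
  proof (intro conjI allI)
    show "vector_space s" "vector_space (mscale s act)" using kalg_vs[OF assms(1)] mscale_vs[OF assms] by auto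
    fix c w y
    show "act (w + y) x = act w x + act y x" by (rule lm(2))
    have "act (s c w) x = act (s c 1 * w) x" by (simp only: e)
    also have "\<dots> = mscale s act c (act w x)" unfolding mscale_def by (rule lm(1))
    finally show "act (s c w) x = mscale s act c (act w x)" .
  qed
qed


definition rat where
  "rat s act W xs n = real (vector_space.dim (mscale s act) (\<Union>i<length xs. (\<lambda>w. act w (xs ! i)) ` W n))
      / real (vector_space.dim s (W n))"

lemma dpos:
  assumes "folner_exhaustion s W"
  shows "eventually (\<lambda>n. 0 < real (vector_space.dim s (W n))) sequentially"
proof -
  have "(\<lambda>n. real (vector_space.dim s ((\<lambda>w. w * 0) ` W n \<union> W n)) / real (vector_space.dim s (W n))) \<longlonglongrightarrow> 1"
    using assms unfolding folner_exhaustion_def by blast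
  then have "eventually (\<lambda>n. 0 < real (vector_space.dim s ((\<lambda>w. w * 0) ` W n \<union> W n)) / real (vector_space.dim s (W n))) sequentially"
    by (rule order_tendstoD) simp
  then show ?thesis by eventually_elim (auto simp: zero_less_divide_iff)
qed

lemma compare:
  fixes s :: "'k::field \<Rightarrow> 'r::ring_1 \<Rightarrow> 'r" and act :: "'r \<Rightarrow> 'm::ab_group_add \<Rightarrow> 'm"
  assumes ka: "k_algebra s" and lm: "left_module act" and fo: "folner_exhaustion s W"
    and gx: "generates act xs"
  shows "\<exists>err. (err \<longlonglongrightarrow> 0) \<and> eventually (\<lambda>n. rat s act W ys n \<le> rat s act W xs n + err n) sequentially"
proof -
  interpret R: vector_space s using kalg_vs[OF ka] .
  have "\<forall>j. \<exists>c. ys ! j = (\<Sum>i<length xs. act (c i) (xs ! i))" using gx unfolding generates_def by blast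
  then obtain cc where cc: "\<And>j. ys ! j = (\<Sum>i<length xs. act (cc j i) (xs ! i))" by metis
  define d where "d n = real (R.dim (W n))" for n
  define u where "u n j i = real (R.dim ((\<lambda>w. w * cc j i) ` W n \<union> W n))" for n j i
  define err where "err n = (\<Sum>j<length ys. \<Sum>i<length xs. (u n j i / d n - 1))" for n
  have fol: "\<And>c. (\<lambda>n. real (R.dim ((\<lambda>w. w * c) ` W n \<union> W n)) / real (R.dim (W n))) \<longlonglongrightarrow> 1"
    using fo unfolding folner_exhaustion_def by blast
  have "err \<longlonglongrightarrow> (\<Sum>j<length ys. \<Sum>i<length xs. (1 - 1))"
    unfolding err_def u_def d_def by (intro tendsto_sum tendsto_diff fol tendsto_const)
  then have e0: "err \<longlonglongrightarrow> 0" by simp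
  have "eventually (\<lambda>n. rat s act W ys n \<le> rat s act W xs n + err n) sequentially"
    using dpos[OF fo]
  proof eventually_elim
    case (elim n)
    then have dp: "0 < d n" unfolding d_def .
    obtain B0 where B0: "finite B0" "W n = R.span B0" using fo unfolding folner_exhaustion_def by blast
    have gr: "act w (ys ! j) = (\<Sum>i<length xs. act (w * cc j i) (xs ! i))" for j w
      unfolding cc act_sum[OF lm finite_lessThan] using lm unfolding left_module_def by simp
    have k: "real (vector_space.dim (mscale s act) (\<Union>j<length ys. (\<lambda>w. act w (ys ! j)) ` R.span B0))
      \<le> real (vector_space.dim (mscale s act) (\<Union>i<length xs. (\<lambda>w. act w (xs ! i)) ` R.span B0))
        + (\<Sum>j<length ys. \<Sum>i<length xs. (real (R.dim ((\<lambda>w. w * cc j i) ` R.span B0 \<union> R.span B0))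
             - real (R.dim (R.span B0))))"
      by (rule key[OF kalg_vs[OF ka] mscale_vs[OF ka lm] kalg_rmul[OF ka] act_lin[OF ka lm] gr B0(1)])
    then have k': "real (vector_space.dim (mscale s act) (\<Union>j<length ys. (\<lambda>w. act w (ys ! j)) ` W n))
      \<le> real (vector_space.dim (mscale s act) (\<Union>i<length xs. (\<lambda>w. act w (xs ! i)) ` W n))
        + (\<Sum>j<length ys. \<Sum>i<length xs. (u n j i - d n))"
      unfolding u_def d_def B0(2) .
    have "rat s act W ys n \<le> (real (vector_space.dim (mscale s act) (\<Union>i<length xs. (\<lambda>w. act w (xs ! i)) ` W n))
        + (\<Sum>j<length ys. \<Sum>i<length xs. (u n j i - d n))) / d n"
      unfolding rat_def d_def[symmetric] using k' dp by (intro divide_right_mono) auto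
    also have "\<dots> = rat s act W xs n + (\<Sum>j<length ys. \<Sum>i<length xs. (u n j i - d n)) / d n"
      unfolding rat_def d_def[symmetric] by (simp add: add_divide_distrib)
    also have "(\<Sum>j<length ys. \<Sum>i<length xs. (u n j i - d n)) / d n = err n"
      unfolding err_def sum_divide_distrib using dp by (simp add: diff_divide_distrib)
    finally show ?case .
  qed
  with e0 show ?thesis by blast
qed


lemma bound:
  fixes s :: "'k::field \<Rightarrow> 'r::ring_1 \<Rightarrow> 'r" and act :: "'r \<Rightarrow> 'm::ab_group_add \<Rightarrow> 'm"
  assumes ka: "k_algebra s" and lm: "left_module act" and fo: "folner_exhaustion s W"
  shows "0 \<le> rat s act W ys n \<and> rat s act W ys n \<le> real (length ys)"
proof -
  interpret R: vector_space s using kalg_vs[OF ka] .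
  interpret M: vector_space "mscale s act" using mscale_vs[OF ka lm] .
  interpret P: vector_space_pair s "mscale s act" by unfold_locales
  obtain B0 where B0: "finite B0" "W n = R.span B0" using fo unfolding folner_exhaustion_def by blast
  obtain D where D: "D \<subseteq> W n" "R.independent D" "W n \<subseteq> R.span D" "card D = R.dim (W n)"
    using R.basis_exists by blast
  have fD: "finite D" using R.independent_span_bound[OF B0(1) D(2)] D(1) B0(2) by blast
  define g where "g j w = act w (ys ! j)" for j w
  have Y: "(\<Union>j<length ys. g j ` W n) \<subseteq> M.span (\<Union>j<length ys. g j ` D)"
  proof -
    have "g j ` W n \<subseteq> M.span (\<Union>j<length ys. g j ` D)" if "j < length ys" for j
    proof -
      have "g j ` W n \<subseteq> g j ` R.span D" using D(3) by blast
      also have "\<dots> = M.span (g j ` D)"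
        using P.linear_span_image[OF act_lin[OF ka lm]] unfolding g_def by simp
      also have "\<dots> \<subseteq> M.span (\<Union>j<length ys. g j ` D)" by (rule M.span_mono) (use that in blast)
      finally show ?thesis .
    qed
    then show ?thesis by blast
  qed
  have "M.dim (\<Union>j<length ys. g j ` W n) \<le> card (\<Union>j<length ys. g j ` D)"
    by (rule M.dim_le_card[OF Y]) (use fD in simp)
  also have "\<dots> \<le> (\<Sum>j<length ys. card (g j ` D))" by (rule card_UN_le) simp
  also have "\<dots> \<le> (\<Sum>j<length ys. card D)" by (rule sum_mono) (rule card_image_le[OF fD])
  finally have le: "real (M.dim (\<Union>j<length ys. g j ` W n)) \<le> real (length ys) * real (R.dim (W n))"
    using D(4) by (simp flip: of_nat_mult)
  show ?thesis
  proof (cases "R.dim (W n) = 0")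
    case True then show ?thesis unfolding rat_def by simp
  next
    case False
    then show ?thesis unfolding rat_def using le unfolding g_def
      by (simp add: divide_le_eq)
  qed
qed

theorem proposition7:
  fixes s :: "'k::field \<Rightarrow> 'r::ring_1 \<Rightarrow> 'r"
    and W :: "nat \<Rightarrow> 'r set"
    and \<omega> :: "nat filter"
    and act :: "'r \<Rightarrow> 'm::ab_group_add \<Rightarrow> 'm"
  assumes "affine_algebra s"
    and "folner_exhaustion s W"
    and "ultrafilter \<omega>" and "\<omega> \<le> sequentially"
    and "left_module act"
    and "\<exists>xs. generates act xs"
  shows "(\<forall>xs ys. generates act xs \<and> generates act ys \<longrightarrow>
            rank_gen s act \<omega> W xs = rank_gen s act \<omega> W ys)
       \<and> (\<forall>xs. generates act xs \<longrightarrow>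
            rank_gen s act \<omega> W xs \<le> real (LEAST n. \<exists>ys. length ys = n \<and> generates act ys))"
proof -
  have ka: "k_algebra s" using assms(1) unfolding affine_algebra_def by blast
  note lm = assms(5) and fo = assms(2)
  have rk: "rank_gen s act \<omega> W xs = Lim \<omega> (rat s act W xs)" for xs
    unfolding rank_gen_def rat_def[abs_def] ..
  have eq: "rank_gen s act \<omega> W xs = rank_gen s act \<omega> W ys"
    if gx: "generates act xs" and gy: "generates act ys" for xs ys
  proof -
    obtain e1 where e1: "e1 \<longlonglongrightarrow> 0" "eventually (\<lambda>n. rat s act W ys n \<le> rat s act W xs n + e1 n) sequentially"
      using compare[OF ka lm fo gx] by blast
    obtain e2 where e2: "e2 \<longlonglongrightarrow> 0" "eventually (\<lambda>n. rat s act W xs n \<le> rat s act W ys n + e2 n) sequentially"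
      using compare[OF ka lm fo gy] by blast
    have "(\<lambda>n. rat s act W ys n - rat s act W xs n) \<longlonglongrightarrow> 0"
    proof (rule tendsto_sandwich[of "\<lambda>n. - e2 n" _ _ e1])
      show "eventually (\<lambda>n. - e2 n \<le> rat s act W ys n - rat s act W xs n) sequentially"
        using e2(2) by eventually_elim simp
      show "eventually (\<lambda>n. rat s act W ys n - rat s act W xs n \<le> e1 n) sequentially"
        using e1(2) by eventually_elim simp
      show "(\<lambda>n. - e2 n) \<longlonglongrightarrow> 0" using tendsto_minus[OF e2(1)] by simp
      show "e1 \<longlonglongrightarrow> 0" by fact
    qed
    then have dz: "((\<lambda>n. rat s act W ys n - rat s act W xs n) \<longlongrightarrow> 0) \<omega>"
      by (rule tendsto_mono[OF assms(4)])
    have "(\<lambda>l. (rat s act W xs \<longlongrightarrow> l) \<omega>) = (\<lambda>l. (rat s act W ys \<longlongrightarrow> l) \<omega>)"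
    proof (rule ext, rule iffI)
      fix l assume "(rat s act W xs \<longlongrightarrow> l) \<omega>"
      from tendsto_add[OF this dz] show "(rat s act W ys \<longlongrightarrow> l) \<omega>" by simp
    next
      fix l assume "(rat s act W ys \<longlongrightarrow> l) \<omega>"
      from tendsto_diff[OF this dz] show "(rat s act W xs \<longlongrightarrow> l) \<omega>" by simp
    qed
    then show ?thesis unfolding rk t2_space_class.Lim_def by simp
  qed
  moreover have "rank_gen s act \<omega> W xs \<le> real (LEAST n. \<exists>ys. length ys = n \<and> generates act ys)"
    if gx: "generates act xs" for xs
  proof -
    let ?N = "LEAST n. \<exists>ys. length ys = n \<and> generates act ys"
    have "\<exists>ys. length ys = ?N \<and> generates act ys"
      by (rule LeastI_ex) (use gx in blast)
    then obtain ys where ys: "length ys = ?N" "generates act ys" by blast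
    obtain L where L: "(rat s act W ys \<longlongrightarrow> L) \<omega>" "L \<le> real (length ys)"
      using ultra_conv[OF assms(3), of "rat s act W ys" "real (length ys)"] bound[OF ka lm fo, of ys] by blast
    have nb: "\<omega> \<noteq> bot" using assms(3) unfolding ultrafilter_def by blast
    have "rank_gen s act \<omega> W ys = L" unfolding rk using tendsto_Lim[OF _ L(1)] nb by simp
    then show ?thesis using eq[OF gx ys(2)] L(2) ys(1) by simp
  qed
  ultimately show ?thesis by blast
qed

end
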